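(* A matroid is binary if and only if it is a BULMAC matroid, i.e., if and only if it is isomorphic to the matroid on $E_m=\{1,\dots,m\}$ with rank function $S\mapsto I(X[S];Y,X[S^c])$ for some linear deterministic binary MAC $W$ (that is, $Y=AX[E_m]$ for some matrix $A$ over $\mathbb{F}_2$ with $m$ columns).
   Context: A binary MAC with $m$ users is a channel $W$ with input alphabet $\mathbb{F}_2^m$ and finite output alphabet. Let $X[E_m]$ have i.i.d. uniform components on $\mathbb{F}_2$ and let $Y$ be the output of $W$ with input $X[E_m]$; for $S\subseteq E_m$, $X[S]=(X[i])_{i\in S}$, $S^c=E_m\setminus S$. Mutual information is in bits. A linear deterministic binary MAC is one with $W(y\mid x)=1$ if $y=Ax$ and $0$ otherwise, for a fixed matrix $A$ over $\mathbb{F}_2$. A matroid is binary if it is isomorphic to the vector matroid of a matrix over $\mathbb{F}_2$. *)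

theory Defs
  imports "HOL-Probability.Probability_Mass_Function" "HOL-Library.Z2" "HOL-Library.Function_Algebras"
begin

definition matroid :: "'a set \<Rightarrow> ('a set \<Rightarrow> nat) \<Rightarrow> bool" where
  "matroid E r \<longleftrightarrow> finite E \<and>
     (\<forall>X. X \<subseteq> E \<longrightarrow> r X \<le> card X) \<and>
     (\<forall>X Y. X \<subseteq> Y \<and> Y \<subseteq> E \<longrightarrow> r X \<le> r Y) \<and>
     (\<forall>X Y. X \<subseteq> E \<and> Y \<subseteq> E \<longrightarrow> r (X \<union> Y) + r (X \<inter> Y) \<le> r X + r Y)"

definition f2scale :: "bit \<Rightarrow> (nat \<Rightarrow> bit) \<Rightarrow> (nat \<Rightarrow> bit)" where
  "f2scale c v = (\<lambda>i. c * v i)"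

lemma vector_space_f2scale: "vector_space f2scale"
  by unfold_locales (auto simp: f2scale_def algebra_simps fun_eq_iff)

definition mat_col :: "nat \<Rightarrow> (nat \<Rightarrow> nat \<Rightarrow> bit) \<Rightarrow> nat \<Rightarrow> (nat \<Rightarrow> bit)" where
  "mat_col k A j = (\<lambda>i. if i < k then A i j else 0)"

definition vec_matroid_rank :: "nat \<Rightarrow> (nat \<Rightarrow> nat \<Rightarrow> bit) \<Rightarrow> nat set \<Rightarrow> nat" where
  "vec_matroid_rank k A S = vector_space.dim f2scale (mat_col k A ` S)"

definition binary_matroid :: "'a set \<Rightarrow> ('a set \<Rightarrow> nat) \<Rightarrow> bool" where
  "binary_matroid E r \<longleftrightarrow> (\<exists>k m A f. bij_betw f E {1..m} \<and>
      (\<forall>S. S \<subseteq> E \<longrightarrow> r S = vec_matroid_rank k A (f ` S)))"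

definition mutual_info :: "'x pmf \<Rightarrow> ('x \<Rightarrow> 'u) \<Rightarrow> ('x \<Rightarrow> 'v) \<Rightarrow> real" where
  "mutual_info P g h =
     (let J = map_pmf (\<lambda>x. (g x, h x)) P; Pg = map_pmf g P; Ph = map_pmf h P in
      \<Sum>ab\<in>set_pmf J. pmf J ab * log 2 (pmf J ab / (pmf Pg (fst ab) * pmf Ph (snd ab))))"

definition mac_input :: "nat \<Rightarrow> (nat \<Rightarrow> bit) pmf" where
  "mac_input m = pmf_of_set (Pi\<^sub>E {1..m} (\<lambda>_. UNIV))"

definition lin_mac_out :: "nat \<Rightarrow> nat \<Rightarrow> (nat \<Rightarrow> nat \<Rightarrow> bit) \<Rightarrow> (nat \<Rightarrow> bit) \<Rightarrow> (nat \<Rightarrow> bit)" where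
  "lin_mac_out k m A x = (\<lambda>i. if i < k then (\<Sum>j\<in>{1..m}. A i j * x j) else 0)"

definition lin_mac_rank :: "nat \<Rightarrow> nat \<Rightarrow> (nat \<Rightarrow> nat \<Rightarrow> bit) \<Rightarrow> nat set \<Rightarrow> real" where
  "lin_mac_rank k m A S = mutual_info (mac_input m)
      (\<lambda>x. restrict x S)
      (\<lambda>x. (lin_mac_out k m A x, restrict x ({1..m} - S)))"

definition bulmac_matroid :: "'a set \<Rightarrow> ('a set \<Rightarrow> nat) \<Rightarrow> bool" where
  "bulmac_matroid E r \<longleftrightarrow> (\<exists>k m A f. bij_betw f E {1..m} \<and>
      (\<forall>S. S \<subseteq> E \<longrightarrow> real (r S) = lin_mac_rank k m A (f ` S)))"

end

theory Submission imports Defs begin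

interpretation vs: vector_space f2scale by (rule vector_space_f2scale)

lemma bit_add_self[simp]: "(a::bit) + a = 0"
  by (cases a) auto

lemma bit_add_eq0[simp]: "((a::bit) + b = 0) = (a = b)"
  by (cases a; cases b) auto

declare add_bit_eq_xor[simp del] mult_bit_eq_and[simp del]

lemma UNIV_bit: "(UNIV::bit set) = {0,1}"
  using bit.exhaust by auto

lemma finite_UNIV_bit[simp]: "finite (UNIV::bit set)"
  by (simp add: UNIV_bit)

lemma card_UNIV_bit[simp]: "card (UNIV::bit set) = 2"
  by (simp add: UNIV_bit)

lemma card_span_indep:
  assumes fin: "finite B" and ind: "vs.independent B"
  shows "card (vs.span B) = 2 ^ card B"
proof -
  define \<Phi> where "\<Phi> u = (\<Sum>v\<in>B. f2scale (u v) v)" for u :: "(nat \<Rightarrow> bit) \<Rightarrow> bit"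
  have img: "\<Phi> ` (PiE B (\<lambda>_. UNIV)) = vs.span B"
  proof
    show "\<Phi> ` (PiE B (\<lambda>_. UNIV)) \<subseteq> vs.span B"
      unfolding vs.span_finite[OF fin] \<Phi>_def by auto
    show "vs.span B \<subseteq> \<Phi> ` (PiE B (\<lambda>_. UNIV))"
    proof
      fix y assume "y \<in> vs.span B"
      then obtain u where y: "y = \<Phi> u" unfolding vs.span_finite[OF fin] \<Phi>_def by auto
      have "\<Phi> (restrict u B) = \<Phi> u" unfolding \<Phi>_def by (intro sum.cong) auto
      then show "y \<in> \<Phi> ` (PiE B (\<lambda>_. UNIV))" using y by (intro image_eqI[of _ _ "restrict u B"]) auto
    qed
  qed
  have inj: "inj_on \<Phi> (PiE B (\<lambda>_. UNIV))"
  proof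
    fix u w assume u: "u \<in> PiE B (\<lambda>_. UNIV)" and w: "w \<in> PiE B (\<lambda>_. UNIV)" and eq: "\<Phi> u = \<Phi> w"
    have "(\<Sum>v\<in>B. f2scale (u v - w v) v) = \<Phi> u - \<Phi> w"
      unfolding \<Phi>_def by (simp only: vs.scale_left_diff_distrib sum_subtractf)
    also have "\<dots> = 0" using eq by simp
    finally have z: "(\<Sum>v\<in>B. f2scale (u v - w v) v) = 0" .
    have H: "\<forall>u. (\<Sum>v\<in>B. f2scale (u v) v) = 0 \<longrightarrow> (\<forall>v\<in>B. u v = 0)"
      using ind fin unfolding vs.independent_explicit_finite_subsets by (meson order_refl)
    have "\<forall>v\<in>B. u v - w v = 0"
      using mp[OF spec[OF H, of "\<lambda>v. u v - w v"] z] by simp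
    then show "u = w" using u w by (intro PiE_ext[OF u w]) auto
  qed
  have "card (vs.span B) = card (PiE B (\<lambda>_. UNIV :: bit set))"
    using card_image[OF inj] img by simp
  also have "\<dots> = 2 ^ card B"
    by (simp add: card_PiE fin card_UNIV_bit)
  finally show ?thesis .
qed

lemma card_span:
  assumes fin: "finite C"
  shows "card (vs.span C) = 2 ^ vs.dim C"
proof -
  obtain B where B: "B \<subseteq> C" "vs.independent B" "C \<subseteq> vs.span B" "card B = vs.dim C"
    using vs.basis_exists by blast
  have finB: "finite B" using B(1) fin finite_subset by blast
  have "vs.span B = vs.span C"
  proof
    show "vs.span B \<subseteq> vs.span C" using B(1) by (rule vs.span_mono)
    show "vs.span C \<subseteq> vs.span B" using vs.span_mono[OF B(3)] by (simp add: vs.span_span)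
  qed
  then show ?thesis using card_span_indep[OF finB B(2)] B(4) by simp
qed

lemma fun_sum_apply: "(sum F S) i = sum (\<lambda>j. F j i) S" for F :: "'b \<Rightarrow> nat \<Rightarrow> bit"
  by (induction S rule: infinite_finite_induct) auto

definition Lf :: "nat \<Rightarrow> (nat \<Rightarrow> nat \<Rightarrow> bit) \<Rightarrow> nat set \<Rightarrow> (nat \<Rightarrow> bit) \<Rightarrow> (nat \<Rightarrow> bit)" where
  "Lf k A S z = (\<lambda>i. if i < k then (\<Sum>j\<in>S. A i j * z j) else 0)"

lemma Lf_eq_sum: "Lf k A S z = (\<Sum>j\<in>S. f2scale (z j) (mat_col k A j))"
  by (auto simp: fun_eq_iff Lf_def fun_sum_apply f2scale_def mat_col_def mult.commute simp del: mult_bit_eq_and add_bit_eq_xor)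

lemma Lf_add: "Lf k A S (\<lambda>j. z j + w j) = Lf k A S z + Lf k A S w"
  by (auto simp: fun_eq_iff Lf_def ring_distribs sum.distrib simp del: mult_bit_eq_and add_bit_eq_xor)

lemma Lf_cong: "(\<And>j. j \<in> S \<Longrightarrow> z j = w j) \<Longrightarrow> Lf k A S z = Lf k A S w"
  by (auto simp: fun_eq_iff Lf_def intro!: sum.cong)

lemma fun_bit_add_self[simp]: "(f::nat\<Rightarrow>bit) + f = 0"
  by (simp add: fun_eq_iff del: add_bit_eq_xor)

lemma Lf_image:
  assumes fin: "finite S"
  shows "Lf k A S ` PiE S (\<lambda>_. UNIV) = vs.span (mat_col k A ` S)"
proof
  show "Lf k A S ` PiE S (\<lambda>_. UNIV) \<subseteq> vs.span (mat_col k A ` S)"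
    unfolding Lf_eq_sum
    apply clarify apply (rule vs.span_sum, rule vs.span_scale, rule vs.span_base) by auto
  show "vs.span (mat_col k A ` S) \<subseteq> Lf k A S ` PiE S (\<lambda>_. UNIV)"
  proof
    fix y assume "y \<in> vs.span (mat_col k A ` S)"
    then show "y \<in> Lf k A S ` PiE S (\<lambda>_. UNIV)"
    proof (induction rule: vs.span_induct_alt)
      case base
      have "Lf k A S (\<lambda>j\<in>S. 0) = 0" by (auto simp: Lf_def fun_eq_iff)
      moreover have "(\<lambda>j\<in>S. 0) \<in> PiE S (\<lambda>_. UNIV :: bit set)" by auto
      ultimately show ?case by (metis image_eqI)
    next
      case (step c x y)
      then obtain j z where j: "j \<in> S" "x = mat_col k A j" and z: "z \<in> PiE S (\<lambda>_. UNIV)" "y = Lf k A S z"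
        by auto
      define z' where "z' = z(j := z j + c)"
      have z'D: "z' \<in> PiE S (\<lambda>_. UNIV)" using z(1) j(1) unfolding z'_def by (auto simp: PiE_iff extensional_def)
      have "Lf k A S z' = Lf k A S (\<lambda>l. z l + (if l = j then c else 0))"
        by (rule Lf_cong) (auto simp: z'_def)
      also have "\<dots> = Lf k A S z + Lf k A S (\<lambda>l. if l = j then c else 0)"
        by (rule Lf_add)
      also have "Lf k A S (\<lambda>l. if l = j then c else 0) = f2scale c x"
        using j fin by (auto simp: Lf_def fun_eq_iff f2scale_def mat_col_def if_distrib[of "\<lambda>t. _ * t"] cong: if_cong simp del: mult_bit_eq_and add_bit_eq_xor)
      finally have "Lf k A S z' = f2scale c x + y" using z(2) by (simp add: add.commute fun_eq_iff)
      then show ?case using z'D by (intro image_eqI[of _ _ z']) auto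
    qed
  qed
qed

lemma fiber_card:
  assumes fin: "finite S" and z0: "z0 \<in> PiE S (\<lambda>_. UNIV :: bit set)"
  shows "card {z\<in>PiE S (\<lambda>_. UNIV). Lf k A S z = Lf k A S z0} = card {z\<in>PiE S (\<lambda>_. UNIV). Lf k A S z = 0}"
proof -
  define D where "D = PiE S (\<lambda>_. UNIV :: bit set)"
  define \<phi> where "\<phi> z = restrict (\<lambda>j. z j + z0 j) S" for z :: "nat \<Rightarrow> bit"
  have finD: "finite D" unfolding D_def using fin by (simp add: finite_PiE)
  have inj: "inj_on \<phi> D"
  proof
    fix z w assume z: "z \<in> D" and w: "w \<in> D" and e: "\<phi> z = \<phi> w"
    have "\<forall>j\<in>S. z j = w j"
    proof
      fix j assume j: "j \<in> S"
      have "z j + z0 j = w j + z0 j" using fun_cong[OF e, of j] j unfolding \<phi>_def by simp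
      then show "z j = w j" by simp
    qed
    then show "z = w" using z w unfolding D_def by (intro PiE_ext) auto
  qed
  have L\<phi>: "Lf k A S (\<phi> z) = Lf k A S z + Lf k A S z0" for z
  proof -
    have "Lf k A S (\<phi> z) = Lf k A S (\<lambda>j. z j + z0 j)" by (rule Lf_cong) (simp add: \<phi>_def)
    also have "\<dots> = Lf k A S z + Lf k A S z0" by (rule Lf_add)
    finally show ?thesis .
  qed
  have \<phi>D: "\<phi> z \<in> D" for z unfolding \<phi>_def D_def by auto
  have 1: "\<phi> ` {z\<in>D. Lf k A S z = 0} \<subseteq> {z\<in>D. Lf k A S z = Lf k A S z0}"
    using \<phi>D L\<phi> by auto
  have 2: "\<phi> ` {z\<in>D. Lf k A S z = Lf k A S z0} \<subseteq> {z\<in>D. Lf k A S z = 0}"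
    using \<phi>D L\<phi> by auto
  have "card {z\<in>D. Lf k A S z = 0} \<le> card {z\<in>D. Lf k A S z = Lf k A S z0}"
    by (rule card_inj_on_le[OF inj_on_subset[OF inj] 1]) (auto intro: finite_subset[OF _ finD])
  moreover have "card {z\<in>D. Lf k A S z = Lf k A S z0} \<le> card {z\<in>D. Lf k A S z = 0}"
    by (rule card_inj_on_le[OF inj_on_subset[OF inj] 2]) (auto intro: finite_subset[OF _ finD])
  ultimately show ?thesis unfolding D_def by simp
qed

lemma kernel_count:
  assumes fin: "finite S"
  shows "card {z\<in>PiE S (\<lambda>_. UNIV :: bit set). Lf k A S z = 0} * 2 ^ vs.dim (mat_col k A ` S) = 2 ^ card S"
proof -
  define D where "D = PiE S (\<lambda>_. UNIV :: bit set)"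
  define K where "K = card {z\<in>D. Lf k A S z = 0}"
  have finD: "finite D" unfolding D_def using fin by (simp add: finite_PiE)
  have "card D = (\<Sum>y\<in>Lf k A S ` D. card {z\<in>D. Lf k A S z = y})"
    unfolding card_eq_sum by (rule sum.image_gen[OF finD])
  also have "\<dots> = (\<Sum>y\<in>Lf k A S ` D. K)"
    by (intro sum.cong refl) (auto simp: K_def D_def fiber_card[OF fin])
  also have "\<dots> = card (Lf k A S ` D) * K" by simp
  also have "card (Lf k A S ` D) = 2 ^ vs.dim (mat_col k A ` S)"
    unfolding D_def Lf_image[OF fin] using card_span fin by simp
  finally have "card D = 2 ^ vs.dim (mat_col k A ` S) * K" .
  moreover have "card D = 2 ^ card S" unfolding D_def using fin by (simp add: card_PiE)
  ultimately show ?thesis unfolding K_def D_def by (simp add: mult.commute)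
qed

lemma pmf_map_of_set:
  assumes "finite \<Omega>" "\<Omega> \<noteq> {}"
  shows "pmf (map_pmf f (pmf_of_set \<Omega>)) y = card {x\<in>\<Omega>. f x = y} / card \<Omega>"
proof -
  have "\<Omega> \<inter> f -` {y} = {x\<in>\<Omega>. f x = y}" by auto
  then show ?thesis using assms by (simp add: pmf_map measure_pmf_of_set)
qed

lemma lin_mac_out_split:
  assumes "S \<subseteq> {1..m}"
  shows "lin_mac_out k m A y = Lf k A S y + Lf k A ({1..m} - S) y"
proof -
  have "{1..m} = S \<union> ({1..m} - S)" using assms by auto
  then have "(\<Sum>j\<in>{1..m}. A i j * y j) = (\<Sum>j\<in>S. A i j * y j) + (\<Sum>j\<in>{1..m} - S. A i j * y j)" for i
    using assms by (metis Diff_disjoint finite_atLeastAtMost finite_subset sum.union_disjoint finite_Diff)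
  then show ?thesis by (auto simp: fun_eq_iff lin_mac_out_def Lf_def)
qed

lemma fiber_h_card:
  assumes S: "S \<subseteq> {1..m}" and x: "x \<in> PiE {1..m} (\<lambda>_. UNIV :: bit set)"
  shows "card {x'\<in>PiE {1..m} (\<lambda>_. UNIV :: bit set). (lin_mac_out k m A x', restrict x' ({1..m} - S)) = (lin_mac_out k m A x, restrict x ({1..m} - S))}
       = card {z\<in>PiE S (\<lambda>_. UNIV :: bit set). Lf k A S z = 0}"
proof -
  define T where "T = {1..m} - S"
  define \<Omega> where "\<Omega> = PiE {1..m} (\<lambda>_. UNIV :: bit set)"
  define D where "D = PiE S (\<lambda>_. UNIV :: bit set)"
  define H where "H = {x'\<in>\<Omega>. (lin_mac_out k m A x', restrict x' T) = (lin_mac_out k m A x, restrict x T)}"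
  define F where "F = {z\<in>D. Lf k A S z = Lf k A S (restrict x S)}"
  have finS: "finite S" using S finite_subset by blast
  have fin\<Omega>: "finite \<Omega>" unfolding \<Omega>_def by (simp add: finite_PiE)
  have finD: "finite D" unfolding D_def using finS by (simp add: finite_PiE)
  have H_iff: "x' \<in> H \<longleftrightarrow> x' \<in> \<Omega> \<and> (\<forall>j\<in>T. x' j = x j) \<and> Lf k A S x' = Lf k A S x" for x'
  proof -
    have "(\<forall>j\<in>T. x' j = x j) \<Longrightarrow> (lin_mac_out k m A x' = lin_mac_out k m A x) = (Lf k A S x' = Lf k A S x)"
    proof -
      assume a: "\<forall>j\<in>T. x' j = x j"
      have "Lf k A T x' = Lf k A T x" using a by (intro Lf_cong) auto
      then show ?thesis using lin_mac_out_split[OF S, of k A] unfolding T_def by auto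
    qed
    moreover have "(restrict x' T = restrict x T) = (\<forall>j\<in>T. x' j = x j)"
      by (auto simp: fun_eq_iff restrict_def)
    ultimately show ?thesis unfolding H_def by auto
  qed
  have "card H \<le> card F"
  proof (rule card_inj_on_le[of "\<lambda>x'. restrict x' S"])
    show "inj_on (\<lambda>x'. restrict x' S) H"
    proof
      fix u w assume u: "u \<in> H" and w: "w \<in> H" and e: "restrict u S = restrict w S"
      have "\<forall>j\<in>{1..m}. u j = w j"
      proof
        fix j assume j: "j \<in> {1..m}"
        show "u j = w j"
        proof (cases "j \<in> S")
          case True then show ?thesis using fun_cong[OF e, of j] by simp
        next
          case False then have "j \<in> T" using j unfolding T_def by auto
          then show ?thesis using u w H_iff by auto
        qed
      qed
      moreover have "u \<in> \<Omega>" "w \<in> \<Omega>" using u w H_iff by auto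
      ultimately show "u = w" unfolding \<Omega>_def by (metis PiE_ext)
    qed
    show "(\<lambda>x'. restrict x' S) ` H \<subseteq> F"
    proof
      fix y assume "y \<in> (\<lambda>x'. restrict x' S) ` H"
      then obtain u where u: "u \<in> H" "y = restrict u S" by auto
      have "Lf k A S (restrict u S) = Lf k A S u" by (rule Lf_cong) auto
      also have "\<dots> = Lf k A S x" using u H_iff by auto
      also have "\<dots> = Lf k A S (restrict x S)" by (rule Lf_cong) auto
      finally show "y \<in> F" unfolding F_def D_def using u by auto
    qed
    show "finite F" unfolding F_def using finD by auto
  qed
  moreover have "card F \<le> card H"
  proof (rule card_inj_on_le[of "\<lambda>z j. if j \<in> S then z j else x j"])
    show "inj_on (\<lambda>z j. if j \<in> S then z j else x j) F"
    proof
      fix u w assume u: "u \<in> F" and w: "w \<in> F" and e: "(\<lambda>j. if j \<in> S then u j else x j) = (\<lambda>j. if j \<in> S then w j else x j)"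
      have "\<forall>j\<in>S. u j = w j" using e by (metis (mono_tags))
      moreover have "u \<in> D" "w \<in> D" using u w unfolding F_def by auto
      ultimately show "u = w" unfolding D_def by (metis PiE_ext)
    qed
    show "(\<lambda>z j. if j \<in> S then z j else x j) ` F \<subseteq> H"
    proof
      fix y assume "y \<in> (\<lambda>z j. if j \<in> S then z j else x j) ` F"
      then obtain z where z: "z \<in> F" "y = (\<lambda>j. if j \<in> S then z j else x j)" by auto
      have y\<Omega>: "y \<in> \<Omega>" using z x S unfolding \<Omega>_def F_def D_def by (auto simp: PiE_iff extensional_def)
      have yT: "\<forall>j\<in>T. y j = x j" using z unfolding T_def by auto
      have "Lf k A S y = Lf k A S z" using z by (intro Lf_cong) auto
      also have "\<dots> = Lf k A S (restrict x S)" using z unfolding F_def by auto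
      also have "\<dots> = Lf k A S x" by (rule Lf_cong) auto
      finally show "y \<in> H" using H_iff y\<Omega> yT by auto
    qed
    show "finite H" unfolding H_def using fin\<Omega> by auto
  qed
  ultimately have "card H = card F" by simp
  also have "card F = card {z\<in>D. Lf k A S z = 0}" unfolding F_def D_def
    by (rule fiber_card[OF finS]) (use x S in auto)
  finally show ?thesis unfolding H_def T_def \<Omega>_def D_def .
qed

lemma fiber_g_card:
  fixes m :: nat
  assumes S: "S \<subseteq> {1..m}" and x: "x \<in> PiE {1..m} (\<lambda>_. UNIV :: bit set)"
  shows "card {x'\<in>PiE {1..m} (\<lambda>_. UNIV :: bit set). restrict x' S = restrict x S} = 2 ^ card ({1..m} - S)"
proof -
  have "{x'\<in>PiE {1..m} (\<lambda>_. UNIV :: bit set). restrict x' S = restrict x S}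
      = PiE {1..m} (\<lambda>j. if j \<in> S then {x j} else UNIV)"
    using S by (auto simp: PiE_iff fun_eq_iff restrict_def extensional_def split: if_splits)
  moreover have "card (PiE {1..m} (\<lambda>j. if j \<in> S then {x j} else (UNIV :: bit set))) = 2 ^ card ({1..m} - S)"
  proof -
    have "card (PiE {1..m} (\<lambda>j. if j \<in> S then {x j} else (UNIV :: bit set)))
        = (\<Prod>j\<in>{1..m}. card (if j \<in> S then {x j} else (UNIV :: bit set)))"
      by (rule card_PiE) simp
    also have "\<dots> = (\<Prod>j\<in>{1..m}. if j \<in> S then 1 else 2)"
      by (rule prod.cong) auto
    also have "\<dots> = (\<Prod>j\<in>{1..m} - S. 2)"
      by (simp add: prod.If_cases Diff_eq)
    also have "\<dots> = 2 ^ card ({1..m} - S)" by simp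
    finally show ?thesis .
  qed
  ultimately show ?thesis by simp
qed

lemma lin_mac_rank_eq:
  assumes S: "S \<subseteq> {1..m}"
  shows "lin_mac_rank k m A S = real (vec_matroid_rank k A S)"
proof -
  define T where "T = {1..m} - S"
  define \<Omega> where "\<Omega> = PiE {1..m} (\<lambda>_. UNIV :: bit set)"
  define g where "g = (\<lambda>x::nat\<Rightarrow>bit. restrict x S)"
  define h where "h = (\<lambda>x. (lin_mac_out k m A x, restrict x T))"
  define gh where "gh = (\<lambda>x. (g x, h x))"
  define r where "r = vs.dim (mat_col k A ` S)"
  define cK where "cK = card {z\<in>PiE S (\<lambda>_. UNIV :: bit set). Lf k A S z = 0}"
  have finS: "finite S" using S finite_subset by blast
  have fin\<Omega>: "finite \<Omega>" unfolding \<Omega>_def by (simp add: finite_PiE)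
  have ne\<Omega>: "\<Omega> \<noteq> {}" unfolding \<Omega>_def by (simp add: PiE_eq_empty_iff)
  have card\<Omega>: "card \<Omega> = 2 ^ m" unfolding \<Omega>_def by (simp add: card_PiE)
  have cardST: "card S + card T = m"
    using S finS card_mono[OF _ S] unfolding T_def by (simp add: card_Diff_subset)
  have kc: "cK * 2 ^ r = 2 ^ card S" unfolding cK_def r_def by (rule kernel_count[OF finS])
  have inj: "inj_on gh \<Omega>"
  proof
    fix u w assume u: "u \<in> \<Omega>" and w: "w \<in> \<Omega>" and e: "gh u = gh w"
    have "u j = w j" if j: "j \<in> {1..m}" for j
    proof (cases "j \<in> S")
      case True
      have "restrict u S = restrict w S" using e unfolding gh_def g_def by auto
      then show ?thesis using True by (metis restrict_apply')
    next
      case False then have "j \<in> T" using j unfolding T_def by auto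
      moreover have "restrict u T = restrict w T" using e unfolding gh_def h_def by auto
      ultimately show ?thesis by (metis restrict_apply')
    qed
    then show "u = w" using u w unfolding \<Omega>_def by (metis PiE_ext)
  qed
  have P: "mac_input m = pmf_of_set \<Omega>" unfolding mac_input_def \<Omega>_def ..
  have J: "map_pmf gh (pmf_of_set \<Omega>) = pmf_of_set (gh ` \<Omega>)"
    by (rule map_pmf_of_set_inj[OF inj ne\<Omega> fin\<Omega>])
  have pJ: "pmf (pmf_of_set (gh ` \<Omega>)) (gh x) = 1 / 2 ^ m" if "x \<in> \<Omega>" for x
    using that fin\<Omega> ne\<Omega> card\<Omega> by (subst pmf_of_set) (auto simp: card_image[OF inj])
  have pg: "pmf (map_pmf g (pmf_of_set \<Omega>)) (g x) = 2 ^ card T / 2 ^ m" if x: "x \<in> \<Omega>" for x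
    using pmf_map_of_set[OF fin\<Omega> ne\<Omega>, of g "g x"] fiber_g_card[OF S, of x] x card\<Omega>
    unfolding g_def T_def \<Omega>_def by simp
  have ph: "pmf (map_pmf h (pmf_of_set \<Omega>)) (h x) = cK / 2 ^ m" if x: "x \<in> \<Omega>" for x
    using pmf_map_of_set[OF fin\<Omega> ne\<Omega>, of h "h x"] fiber_h_card[OF S, of x k A] x card\<Omega>
    unfolding h_def T_def \<Omega>_def cK_def by simp
  have trm: "(1 / 2 ^ m) * log 2 ((1 / 2 ^ m) / ((2 ^ card T / 2 ^ m) * (real cK / 2 ^ m))) = r / 2 ^ m"
  proof -
    have kc': "real cK * 2 ^ r = 2 ^ card S" using kc by (metis of_nat_mult of_nat_numeral of_nat_power)
    have m': "(2::real) ^ m = 2 ^ card S * 2 ^ card T" using cardST by (metis power_add add.commute)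
    have cpos: "real cK > 0" using kc' by (metis mult_pos_pos zero_less_power zero_less_numeral linorder_neqE_linordered_idom mult_eq_0_iff of_nat_less_0_iff less_irrefl not_less_iff_gr_or_eq power_eq_0_iff)
    have "(1 / 2 ^ m) / ((2 ^ card T / 2 ^ m) * (real cK / 2 ^ m)) = (2::real) ^ m / (2 ^ card T * real cK)"
      by (simp add: field_simps)
    also have "\<dots> = 2 ^ r" unfolding m' using cpos kc'[symmetric] by (simp add: field_simps)
    finally show ?thesis by (simp add: log_nat_power)
  qed
  have "lin_mac_rank k m A S = mutual_info (pmf_of_set \<Omega>) g h"
    unfolding lin_mac_rank_def P g_def h_def T_def ..
  also have "\<dots> = (\<Sum>ab\<in>gh ` \<Omega>. pmf (pmf_of_set (gh ` \<Omega>)) ab * log 2 (pmf (pmf_of_set (gh ` \<Omega>)) ab /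
       (pmf (map_pmf g (pmf_of_set \<Omega>)) (fst ab) * pmf (map_pmf h (pmf_of_set \<Omega>)) (snd ab))))"
    unfolding mutual_info_def Let_def gh_def[symmetric] J using fin\<Omega> ne\<Omega> by simp
  also have "\<dots> = (\<Sum>x\<in>\<Omega>. pmf (pmf_of_set (gh ` \<Omega>)) (gh x) * log 2 (pmf (pmf_of_set (gh ` \<Omega>)) (gh x) /
       (pmf (map_pmf g (pmf_of_set \<Omega>)) (g x) * pmf (map_pmf h (pmf_of_set \<Omega>)) (h x))))"
    by (subst sum.reindex[OF inj]) (simp add: gh_def)
  also have "\<dots> = (\<Sum>x\<in>\<Omega>. r / 2 ^ m)"
    by (intro sum.cong refl) (simp only: pJ pg ph trm)
  also have "\<dots> = r" using card\<Omega> by simp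
  finally show ?thesis unfolding r_def vec_matroid_rank_def .
qed

theorem mainTheorem3:
  fixes E :: "'a set" and r :: "'a set \<Rightarrow> nat"
  assumes "matroid E r"
  shows "binary_matroid E r \<longleftrightarrow> bulmac_matroid E r"
proof -
  have key: "(\<forall>S. S \<subseteq> E \<longrightarrow> r S = vec_matroid_rank k A (f ` S)) \<longleftrightarrow>
        (\<forall>S. S \<subseteq> E \<longrightarrow> real (r S) = lin_mac_rank k m A (f ` S))"
    if bij: "bij_betw f E {1..m}" for k m A and f :: "'a \<Rightarrow> nat"
  proof -
    have "f ` S \<subseteq> {1..m}" if "S \<subseteq> E" for S
      using that bij unfolding bij_betw_def by auto
    then show ?thesis using lin_mac_rank_eq by auto
  qed
  show ?thesis unfolding binary_matroid_def bulmac_matroid_def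
    using key by meson
qed

end
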